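(* Let $d\ge2$ be an integer, let $D_1,\dots,D_d$ be real constants, $D=\sum_iD_i$, and let $\lambda<\pi^2/d$. Let $L=(L_1,\dots,L_d)\in C^1([0,1];\mathbb{R}^d)$ be the unique solution of $$L_i'=-\Big(\sum_{k=1}^dL_k\Big)L_i-\lambda\ \text{ on }[0,1],\qquad\int_0^1L_i(r)\,dr=D_i\qquad(i=1,\dots,d).$$ If moreover $$(d-1)\lambda=\sum_{i=1}^dL_i(0)^2-\Big(\sum_{i=1}^dL_i(0)\Big)^2,$$ then $\lambda\in[-D^2/d,\pi^2/d)$. *)

theory Defs
  imports "HOL-Analysis.Analysis"
begin

end

theory Submission
  imports Defs
begin

lemma sign_pres:
  fixes S :: "real \<Rightarrow> real" and a c :: real
  assumes cont: "continuous_on {0..1} S"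
    and der: "\<forall>r\<in>{0..1}. (S has_real_derivative (a\<^sup>2 - (S r)\<^sup>2)) (at r within {0..1})"
    and cc: "c\<^sup>2 = a\<^sup>2"
    and r: "r \<in> {0..1}"
  shows "S r - c = (S 0 - c) * exp (- integral {0..r} (\<lambda>t. S t + c))"
proof -
  define F where "F = (\<lambda>x. integral {0..x} (\<lambda>t. S t + c))"
  have contc: "continuous_on {0..1} (\<lambda>t. S t + c)"
    using cont by (intro continuous_intros)
  have "\<forall>x\<in>{0..1::real}. ((\<lambda>x. (S x - c) * exp (F x)) has_real_derivative 0) (at x within {0..1})"
  proof
    fix x :: real assume x: "x \<in> {0..1}"
    have dF: "(F has_real_derivative (S x + c)) (at x within {0..1})"
      unfolding F_def by (rule integral_has_real_derivative[OF contc x])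
    have dS: "(S has_real_derivative (a\<^sup>2 - (S x)\<^sup>2)) (at x within {0..1})"
      using der x by blast
    have "((\<lambda>x. (S x - c) * exp (F x)) has_real_derivative
        ((a\<^sup>2 - (S x)\<^sup>2) * exp (F x) + (S x - c) * (exp (F x) * (S x + c)))) (at x within {0..1})"
      using DERIV_mult'[OF DERIV_diff[OF dS DERIV_const[of c]] DERIV_exp[THEN DERIV_chain2, OF dF]]
      by (rule DERIV_cong) (simp add: algebra_simps)
    moreover have "(a\<^sup>2 - (S x)\<^sup>2) * exp (F x) + (S x - c) * (exp (F x) * (S x + c)) = 0"
      using cc by (simp add: algebra_simps power2_eq_square)
    ultimately show "((\<lambda>x. (S x - c) * exp (F x)) has_real_derivative 0) (at x within {0..1})"
      by simp
  qed
  then obtain k where k: "\<forall>x\<in>{0..1::real}. (S x - c) * exp (F x) = k"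
    using has_field_derivative_zero_constant[of "{0..1::real}"] by blast
  have "F 0 = 0" unfolding F_def by simp
  moreover have "(S 0 - c) * exp (F 0) = k" using k by simp
  ultimately have "k = S 0 - c" by simp
  then have "(S r - c) * exp (F r) = S 0 - c" using k r by auto
  then have "S r - c = (S 0 - c) * exp (- F r)"
    by (simp add: exp_minus field_simps)
  then show ?thesis unfolding F_def .
qed

theorem lemma3p3:
  fixes d :: nat and Dc :: "nat \<Rightarrow> real" and lam :: real
    and L :: "nat \<Rightarrow> real \<Rightarrow> real"
  assumes hd: "d \<ge> 2"
    and hlam: "lam < pi\<^sup>2 / real d"
    and hC1: "\<forall>i<d. continuous_on {0..1} (L i)"
    and hode: "\<forall>i<d. \<forall>r\<in>{0..1}.
        (L i has_real_derivative (- (\<Sum>k<d. L k r) * L i r - lam)) (at r within {0..1})"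
    and hint: "\<forall>i<d. (L i has_integral Dc i) {0..1}"
    and hcond: "real (d - 1) * lam = (\<Sum>i<d. (L i 0)\<^sup>2) - (\<Sum>i<d. L i 0)\<^sup>2"
  shows "lam \<in> {- (\<Sum>i<d. Dc i)\<^sup>2 / real d ..< pi\<^sup>2 / real d}"
proof -
  have dpos: "real d > 0" using hd by simp
  have "- lam * real d \<le> (\<Sum>i<d. Dc i)\<^sup>2"
  proof (cases "lam \<ge> 0")
    case True
    have "- lam * real d \<le> 0" using True dpos by simp
    also have "0 \<le> (\<Sum>i<d. Dc i)\<^sup>2" by simp
    finally show ?thesis .
  next
    case False
    define a where "a = sqrt (- lam * real d)"
    have nn: "0 \<le> - lam * real d" using False by (intro mult_nonneg_nonneg) auto
    have a2: "a\<^sup>2 = - lam * real d" unfolding a_def by (rule real_sqrt_pow2[OF nn])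
    have apos: "a \<ge> 0" unfolding a_def by (rule real_sqrt_ge_zero[OF nn])
    define S where "S = (\<lambda>r. \<Sum>k<d. L k r)"
    have contS: "continuous_on {0..1} S"
      unfolding S_def using hC1 by (intro continuous_on_sum) auto
    have derS: "\<forall>r\<in>{0..1}. (S has_real_derivative (a\<^sup>2 - (S r)\<^sup>2)) (at r within {0..1})"
    proof
      fix r :: real assume r: "r \<in> {0..1}"
      have "((\<lambda>x. \<Sum>k<d. L k x) has_real_derivative (\<Sum>i<d. - (\<Sum>k<d. L k r) * L i r - lam))
            (at r within {0..1})"
        using hode r by (intro DERIV_sum) auto
      moreover have "(\<Sum>i<d. - (\<Sum>k<d. L k r) * L i r - lam) = a\<^sup>2 - (S r)\<^sup>2"
        unfolding a2 S_def
        by (simp add: sum_subtractf sum_negf sum_distrib_left[symmetric] power2_eq_square)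
      ultimately show "(S has_real_derivative (a\<^sup>2 - (S r)\<^sup>2)) (at r within {0..1})"
        unfolding S_def by simp
    qed
    have intS: "(S has_integral (\<Sum>i<d. Dc i)) {0..1}"
      unfolding S_def using hint by (intro has_integral_sum) auto
    have cs: "(\<Sum>i<d. L i 0)\<^sup>2 \<le> (\<Sum>i<d. (L i 0)\<^sup>2) * real d"
      using sum_squared_le_sum_of_squares[of "\<lambda>i. L i 0" "{..<d}"] by simp
    have d1: "real (d - 1) = real d - 1" using hd by simp
    have "real d * ((real d - 1) * lam) \<ge> (1 - real d) * (S 0)\<^sup>2"
    proof -
      have e: "real d * ((real d - 1) * lam) = real d * (\<Sum>i<d. (L i 0)\<^sup>2) - real d * (S 0)\<^sup>2"
        using hcond unfolding d1 S_def by (simp add: right_diff_distrib)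
      have "(1 - real d) * (S 0)\<^sup>2 = (S 0)\<^sup>2 - real d * (S 0)\<^sup>2" by (simp add: algebra_simps)
      then show ?thesis using e cs unfolding S_def by (simp add: mult.commute)
    qed
    then have "(real d - 1) * (real d * lam + (S 0)\<^sup>2) \<ge> 0"
      by (simp add: algebra_simps)
    then have "real d * lam + (S 0)\<^sup>2 \<ge> 0"
      using hd by (simp add: zero_le_mult_iff)
    then have S0a: "(S 0)\<^sup>2 \<ge> a\<^sup>2" using a2 by (simp add: mult.commute)
    show ?thesis
    proof (cases "S 0 \<ge> 0")
      case True
      then have S0: "S 0 \<ge> a" using S0a power2_le_imp_le[of a "S 0"] by simp
      have ge: "\<forall>r\<in>{0..1}. S r \<ge> a"
      proof
        fix r :: real assume r: "r \<in> {0..1}"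
        have "S r - a = (S 0 - a) * exp (- integral {0..r} (\<lambda>t. S t + a))"
          by (rule sign_pres[OF contS derS _ r]) simp
        moreover have "(S 0 - a) * exp (- integral {0..r} (\<lambda>t. S t + a)) \<ge> 0"
          using S0 by simp
        ultimately show "S r \<ge> a" by simp
      qed
      have "a \<le> (\<Sum>i<d. Dc i)"
        using has_integral_le[OF has_integral_const_real[of a 0 1] intS] ge by simp
      then have "a\<^sup>2 \<le> (\<Sum>i<d. Dc i)\<^sup>2" using apos by (simp add: power_mono)
      then show ?thesis using a2 by simp
    next
      case False
      then have S0: "S 0 \<le> - a" using S0a power2_le_imp_le[of a "- S 0"] by simp
      have ge: "\<forall>r\<in>{0..1}. S r \<le> - a"
      proof
        fix r :: real assume r: "r \<in> {0..1}"
        have "S r - (-a) = (S 0 - (-a)) * exp (- integral {0..r} (\<lambda>t. S t + (-a)))"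
          by (rule sign_pres[OF contS derS _ r]) simp
        moreover have "(S 0 - (-a)) * exp (- integral {0..r} (\<lambda>t. S t + (-a))) \<le> 0"
          using S0 by (simp add: mult_nonpos_nonneg)
        ultimately show "S r \<le> - a" by simp
      qed
      have "(\<Sum>i<d. Dc i) \<le> - a"
        using has_integral_le[OF intS has_integral_const_real[of "-a" 0 1]] ge by simp
      then have "a\<^sup>2 \<le> (- (\<Sum>i<d. Dc i))\<^sup>2" using apos
        by (intro power_mono) auto
      then have "a\<^sup>2 \<le> (\<Sum>i<d. Dc i)\<^sup>2" by simp
      then show ?thesis using a2 by simp
    qed
  qed
  then have "- (\<Sum>i<d. Dc i)\<^sup>2 \<le> lam * real d" by linarith
  then have "- (\<Sum>i<d. Dc i)\<^sup>2 / real d \<le> lam"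
    by (simp only: pos_divide_le_eq[OF dpos])
  then show ?thesis using hlam by simp
qed

end
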